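(* Let $X$, $Y$ be disjoint sets of cardinality at least two, $M\le\mathrm{Sym}(X)$ and $N\le\mathrm{Sym}(Y)$ nontrivial permutation groups, $T$ the $(|X|,|Y|)$-biregular tree and $c$ a legal colouring. Let $a$ be any arc of $T$ and $G:=U_c(M,N)$. Then for every $h\in G_a$ (the subgroup fixing both $o(a)$ and $t(a)$) there exists $g\in G$ such that $g$ fixes $T_{\overline{a}}$ pointwise and $g|_{T_a} = h|_{T_a}$.
   Context: $T$ has natural bipartition $VT=V_X\sqcup V_Y$ (vertices in $V_X$ have valency $|X|$, in $V_Y$ valency $|Y|$). An arc is an ordered pair $a=(o(a),t(a))$ of adjacent vertices, and $\overline{a}=(t(a),o(a))$. $T_a$ denotes the connected component of $T$ with the edge $\{o(a),t(a)\}$ removed that contains $o(a)$, and $T_{\overline a}$ the component containing $t(a)$. $A(v)$, $\overline{A}(v)$ are the sets of arcs with origin, resp. terminus, $v$. A legal colouring is a map $c:AT\to X\cup Y$ restricting to a bijection $A(v)\to X$ for $v\in V_X$, to a bijection $A(v)\to Y$ for $v\in V_Y$, and constant on each $\overline{A}(v)$. $U_c(M,N)$ is the group of $g\in\mathrm{Aut}(T)$ with $gV_X=V_X$ and $c|_{A(gv)}\circ g|_{A(v)}\circ(c|_{A(v)})^{-1}$ in $M$ for $v\in V_X$ and in $N$ for $v\in V_Y$. *)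

theory Defs
  imports "HOL-Algebra.Bij" "HOL-Library.Equipollence"
begin

text \<open>A graph on the vertex type 'v is given by an adjacency relation E.
  Arcs are ordered pairs (u, w) with E u w.\<close>

definition graph_cycle :: "('v \<Rightarrow> 'v \<Rightarrow> bool) \<Rightarrow> 'v list \<Rightarrow> bool" where
  "graph_cycle E vs \<longleftrightarrow> length vs \<ge> 3 \<and> distinct vs
     \<and> (\<forall>i. Suc i < length vs \<longrightarrow> E (vs ! i) (vs ! Suc i))
     \<and> E (last vs) (hd vs)"

definition is_tree :: "('v \<Rightarrow> 'v \<Rightarrow> bool) \<Rightarrow> bool" where
  "is_tree E \<longleftrightarrow> (\<forall>u w. E u w \<longrightarrow> E w u) \<and> (\<forall>u. \<not> E u u)
     \<and> (\<forall>u w. (u, w) \<in> {(p, q). E p q}\<^sup>*)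
     \<and> (\<nexists>vs. graph_cycle E vs)"

text \<open>T is the (|X|,|Y|)-biregular tree with bipartition VX (the complement being VY).\<close>
definition biregular_tree ::
  "('v \<Rightarrow> 'v \<Rightarrow> bool) \<Rightarrow> 'v set \<Rightarrow> 'c set \<Rightarrow> 'c set \<Rightarrow> bool" where
  "biregular_tree E VX X Y \<longleftrightarrow> is_tree E
     \<and> (\<forall>u w. E u w \<longrightarrow> (u \<in> VX \<longleftrightarrow> w \<notin> VX))
     \<and> (\<forall>v \<in> VX. {w. E v w} \<approx> X)
     \<and> (\<forall>v. v \<notin> VX \<longrightarrow> {w. E v w} \<approx> Y)"

definition legal_colouring ::
  "('v \<Rightarrow> 'v \<Rightarrow> bool) \<Rightarrow> 'v set \<Rightarrow> 'c set \<Rightarrow> 'c set \<Rightarrow> ('v \<times> 'v \<Rightarrow> 'c) \<Rightarrow> bool" where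
  "legal_colouring E VX X Y c \<longleftrightarrow>
     (\<forall>v \<in> VX. bij_betw (\<lambda>w. c (v, w)) {w. E v w} X)
     \<and> (\<forall>v. v \<notin> VX \<longrightarrow> bij_betw (\<lambda>w. c (v, w)) {w. E v w} Y)
     \<and> (\<forall>v u u'. E u v \<and> E u' v \<longrightarrow> c (u, v) = c (u', v))"

definition tree_aut :: "('v \<Rightarrow> 'v \<Rightarrow> bool) \<Rightarrow> ('v \<Rightarrow> 'v) \<Rightarrow> bool" where
  "tree_aut E g \<longleftrightarrow> bij g \<and> (\<forall>u w. E u w \<longleftrightarrow> E (g u) (g w))"

text \<open>The local action c|A(gv) o g|A(v) o (c|A(v))^-1, as an (extensional) map on D
  (D = X for v in VX, D = Y for v in VY).\<close>
definition local_action ::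
  "('v \<Rightarrow> 'v \<Rightarrow> bool) \<Rightarrow> ('v \<times> 'v \<Rightarrow> 'c) \<Rightarrow> ('v \<Rightarrow> 'v) \<Rightarrow> 'v \<Rightarrow> 'c set \<Rightarrow> 'c \<Rightarrow> 'c" where
  "local_action E c g v D = (\<lambda>x \<in> D. c (g v, g (THE w. E v w \<and> c (v, w) = x)))"

definition U_c ::
  "('v \<Rightarrow> 'v \<Rightarrow> bool) \<Rightarrow> 'v set \<Rightarrow> 'c set \<Rightarrow> 'c set \<Rightarrow> ('v \<times> 'v \<Rightarrow> 'c)
     \<Rightarrow> ('c \<Rightarrow> 'c) set \<Rightarrow> ('c \<Rightarrow> 'c) set \<Rightarrow> ('v \<Rightarrow> 'v) set" where
  "U_c E VX X Y c M N = {g. tree_aut E g \<and> g ` VX = VX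
     \<and> (\<forall>v \<in> VX. local_action E c g v X \<in> M)
     \<and> (\<forall>v. v \<notin> VX \<longrightarrow> local_action E c g v Y \<in> N)}"

text \<open>half_tree E u w = vertex set of T_a for the arc a = (u, w): the component of
  T minus the edge {u, w} containing u.\<close>
definition half_tree :: "('v \<Rightarrow> 'v \<Rightarrow> bool) \<Rightarrow> 'v \<Rightarrow> 'v \<Rightarrow> 'v set" where
  "half_tree E u w = {x. (u, x) \<in> {(p, q). E p q \<and> {p, q} \<noteq> {u, w}}\<^sup>*}"

end

theory Submission
  imports Defs "HOL-Library.Transitive_Closure_Table"
begin

lemma the_nb:
  assumes "bij_betw (\<lambda>w. c (v, w)) {w. E v w} D" "x \<in> D"
  shows "E v (THE w. E v w \<and> c (v, w) = x) \<and> c (v, THE w. E v w \<and> c (v, w) = x) = x"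
proof -
  have "x \<in> (\<lambda>w. c (v, w)) ` {w. E v w}" using assms bij_betw_imp_surj_on by metis
  then obtain w0 where w0: "E v w0" "c (v, w0) = x" by auto
  have inj: "inj_on (\<lambda>w. c (v, w)) {w. E v w}" using assms(1) bij_betw_imp_inj_on by metis
  have u: "\<And>w. E v w \<and> c (v, w) = x \<Longrightarrow> w = w0"
  proof -
    fix w assume "E v w \<and> c (v, w) = x"
    then show "w = w0" using inj_onD[OF inj, of w w0] w0 by simp
  qed
  have "(THE w. E v w \<and> c (v, w) = x) = w0" by (rule the_equality) (use w0 in simp, use u in blast)
  then show ?thesis using w0 by simp
qed

lemma la_cong:
  assumes "bij_betw (\<lambda>w. c (v, w)) {w. E v w} D" "g v = h v" "\<forall>y. E v y \<longrightarrow> g y = h y"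
  shows "local_action E c g v D = local_action E c h v D"
  unfolding local_action_def
proof (rule restrict_ext)
  fix x assume "x \<in> D"
  then show "c (g v, g (THE w. E v w \<and> c (v, w) = x)) = c (h v, h (THE w. E v w \<and> c (v, w) = x))"
    using the_nb[where c=c and v=v and E=E and D=D, OF assms(1)] assms(2,3) by metis
qed

lemma la_id:
  assumes "bij_betw (\<lambda>w. c (v, w)) {w. E v w} D" "g v = v" "\<forall>y. E v y \<longrightarrow> g y = y"
  shows "local_action E c g v D = (\<lambda>x\<in>D. x)"
  unfolding local_action_def
proof (rule restrict_ext)
  fix x assume "x \<in> D"
  then show "c (g v, g (THE w. E v w \<and> c (v, w) = x)) = x"
    using the_nb[where c=c and v=v and E=E and D=D, OF assms(1)] assms(2,3) by metis
qed

lemma aut_pres: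
  assumes "inj f" "\<forall>p q. E p q \<longrightarrow> E (f p) (f q)" "f u = u" "f w = w"
    and "(u, x) \<in> {(p, q). E p q \<and> {p, q} \<noteq> {u, w}}\<^sup>*"
  shows "(u, f x) \<in> {(p, q). E p q \<and> {p, q} \<noteq> {u, w}}\<^sup>*"
  using assms(5)
proof (induction rule: rtrancl_induct)
  case base then show ?case using assms(3) by simp
next
  case (step y z)
  have "{f y, f z} \<noteq> {u, w}"
  proof
    assume "{f y, f z} = {u, w}"
    then have "f ` {y, z} = f ` {u, w}" using assms(3,4) by simp
    then have "{y, z} = {u, w}" by (simp only: inj_image_eq_iff[OF assms(1)])
    then show False using step by simp
  qed
  then have "(f y, f z) \<in> {(p, q). E p q \<and> {p, q} \<noteq> {u, w}}" using step assms(2) by simp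
  then show ?case using step by (meson rtrancl_into_rtrancl)
qed

lemma no_back:
  assumes "is_tree E" "E u w"
  shows "w \<notin> half_tree E u w"
proof
  define R where "R = (\<lambda>p q. E p q \<and> {p, q} \<noteq> {u, w})"
  assume "w \<in> half_tree E u w"
  then have "(u, w) \<in> {(p, q). R p q}\<^sup>*" unfolding half_tree_def R_def by simp
  then have "R\<^sup>*\<^sup>* u w" by (simp add: rtranclp_rtrancl_eq)
  then obtain xs where "rtrancl_path R u xs w" using rtranclp_eq_rtrancl_path by metis
  then obtain xs' where p: "rtrancl_path R u xs' w" and d: "distinct (u # xs')"
    using rtrancl_path_distinct by metis
  have sym: "\<And>p q. E p q \<Longrightarrow> E q p" and irr: "\<And>p. \<not> E p p"
    and nc: "\<nexists>vs. graph_cycle E vs" using assms(1) unfolding is_tree_def by auto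
  have ne: "xs' \<noteq> []"
  proof
    assume "xs' = []"
    then have "u = w" using p by (auto elim: rtrancl_path.cases)
    then show False using irr assms(2) by simp
  qed
  have "length xs' \<ge> 2"
  proof (rule ccontr)
    assume "\<not> length xs' \<ge> 2"
    obtain z zs where "xs' = z # zs" using ne by (cases xs') auto
    then have z: "xs' = [z]" using \<open>\<not> length xs' \<ge> 2\<close> by (cases zs) auto
    then have "R u z" "z = w" using p by (auto elim!: rtrancl_path.cases)
    then show False unfolding R_def by simp
  qed
  have "graph_cycle E (u # xs')"
    unfolding graph_cycle_def
  proof (intro conjI allI impI)
    show "3 \<le> length (u # xs')" using \<open>length xs' \<ge> 2\<close> by simp
    show "distinct (u # xs')" by (rule d)
    fix i assume "Suc i < length (u # xs')"
    then have "R ((u # xs') ! i) (xs' ! i)" using rtrancl_path_nth[OF p] by simp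
    then show "E ((u # xs') ! i) ((u # xs') ! Suc i)" unfolding R_def by simp
  next
    have "last (u # xs') = w" using rtrancl_path_last[OF p ne] ne by simp
    then show "E (last (u # xs')) (hd (u # xs'))" using sym assms(2) by simp
  qed
  then show False using nc by blast
qed

theorem lemma3p11:
  fixes E :: "'v \<Rightarrow> 'v \<Rightarrow> bool" and VX :: "'v set"
    and X Y :: "'c set" and M N :: "('c \<Rightarrow> 'c) set"
    and c :: "'v \<times> 'v \<Rightarrow> 'c" and a :: "'v \<times> 'v" and h :: "'v \<Rightarrow> 'v"
  assumes "X \<inter> Y = {}"
    and "\<exists>x1 x2. x1 \<in> X \<and> x2 \<in> X \<and> x1 \<noteq> x2"
    and "\<exists>y1 y2. y1 \<in> Y \<and> y2 \<in> Y \<and> y1 \<noteq> y2"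
    and "subgroup M (BijGroup X)" and "M \<noteq> {\<one>\<^bsub>BijGroup X\<^esub>}"
    and "subgroup N (BijGroup Y)" and "N \<noteq> {\<one>\<^bsub>BijGroup Y\<^esub>}"
    and "biregular_tree E VX X Y"
    and "legal_colouring E VX X Y c"
    and "E (fst a) (snd a)"
    and "h \<in> U_c E VX X Y c M N" and "h (fst a) = fst a" and "h (snd a) = snd a"
  shows "\<exists>g \<in> U_c E VX X Y c M N.
           (\<forall>x \<in> half_tree E (snd a) (fst a). g x = x)
         \<and> (\<forall>x \<in> half_tree E (fst a) (snd a). g x = h x)"
proof -
  define u where "u = fst a"
  define w where "w = snd a"
  define A where "A = half_tree E u w"
  define R where "R = {(p, q). E p q \<and> {p, q} \<noteq> {u, w}}"
  define g where "g = (\<lambda>x. if x \<in> A then h x else x)"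
  have tree: "is_tree E" using assms(8) unfolding biregular_tree_def by simp
  have sym: "\<And>p q. E p q \<Longrightarrow> E q p" using tree unfolding is_tree_def by auto
  have Euw: "E u w" using assms(10) unfolding u_def w_def .
  have hu: "h u = u" and hw: "h w = w" using assms(12,13) unfolding u_def w_def .
  have hU: "tree_aut E h" "h ` VX = VX"
    "\<forall>v \<in> VX. local_action E c h v X \<in> M"
    "\<forall>v. v \<notin> VX \<longrightarrow> local_action E c h v Y \<in> N"
    using assms(11) unfolding U_c_def by auto
  have bh: "bij h" and Eh: "\<And>p q. E p q \<longleftrightarrow> E (h p) (h q)" using hU(1) unfolding tree_aut_def by auto
  have injh: "inj h" using bh bij_is_inj by blast
  have A_def': "A = {x. (u, x) \<in> R\<^sup>*}" unfolding A_def half_tree_def R_def by simp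
  have Ehf: "\<forall>p q. E p q \<longrightarrow> E (h p) (h q)" using Eh by blast
  have uA: "u \<in> A" unfolding A_def' by simp
  have wA: "w \<notin> A" unfolding A_def using no_back[OF tree Euw] .
  have hA: "\<And>x. x \<in> A \<Longrightarrow> h x \<in> A"
    unfolding A_def' R_def using aut_pres[OF injh Ehf hu hw] by simp
  have bih: "bij (inv_into UNIV h)" using bh by (simp add: bij_imp_bij_inv)
  have hih: "\<And>x. h (inv_into UNIV h x) = x" using bh by (simp add: bij_is_surj surj_f_inv_f)
  have ihh: "\<And>x. inv_into UNIV h (h x) = x" using injh by simp
  have Eih: "\<forall>p q. E p q \<longrightarrow> E (inv_into UNIV h p) (inv_into UNIV h q)" using Eh hih by metis
  have ihu: "inv_into UNIV h u = u" and ihw: "inv_into UNIV h w = w" using hu hw ihh by metis+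
  have ihA: "\<And>x. x \<in> A \<Longrightarrow> inv_into UNIV h x \<in> A"
    unfolding A_def' R_def using aut_pres[OF bij_is_inj[OF bih] Eih ihu ihw] by simp
  have hA': "\<And>x. h x \<in> A \<Longrightarrow> x \<in> A" using ihA ihh by metis
  have F3: "\<And>x y. E x y \<Longrightarrow> x \<in> A \<Longrightarrow> y \<notin> A \<Longrightarrow> x = u \<and> y = w"
  proof -
    fix x y assume xy: "E x y" "x \<in> A" "y \<notin> A"
    have "{x, y} = {u, w}"
    proof (rule ccontr)
      assume "{x, y} \<noteq> {u, w}"
      then have "(x, y) \<in> R" using xy unfolding R_def by simp
      then have "y \<in> A" using xy(2) unfolding A_def' by (simp add: rtrancl_into_rtrancl)
      then show False using xy by simp
    qed
    then show "x = u \<and> y = w" using xy wA uA by (auto simp: doubleton_eq_iff)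
  qed
  have gnb_in: "\<And>v y. v \<in> A \<Longrightarrow> E v y \<Longrightarrow> g y = h y"
    unfolding g_def using F3 hw by auto
  have gnb_out: "\<And>v y. v \<notin> A \<Longrightarrow> E v y \<Longrightarrow> g y = y"
    unfolding g_def using F3 sym hu by fastforce
  have legal: "\<And>v. v \<in> VX \<Longrightarrow> bij_betw (\<lambda>w. c (v, w)) {w. E v w} X"
    "\<And>v. v \<notin> VX \<Longrightarrow> bij_betw (\<lambda>w. c (v, w)) {w. E v w} Y"
    using assms(9) unfolding legal_colouring_def by auto
  have one: "(\<lambda>x\<in>X. x) \<in> M" "(\<lambda>x\<in>Y. x) \<in> N"
    using subgroup.one_closed[OF assms(4)] subgroup.one_closed[OF assms(6)]
    by (simp_all add: BijGroup_def)
  have injg: "inj g"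
  proof (rule injI)
    fix x y assume gxy: "g x = g y"
    show "x = y"
    proof (cases "x \<in> A"; cases "y \<in> A")
      assume "x \<in> A" "y \<in> A"
      then have "h x = h y" using gxy unfolding g_def by simp
      then show "x = y" using injh by (simp add: inj_eq)
    next
      assume "x \<in> A" "y \<notin> A"
      then have "h x = y" using gxy unfolding g_def by simp
      then show "x = y" using hA \<open>x \<in> A\<close> \<open>y \<notin> A\<close> by blast
    next
      assume "x \<notin> A" "y \<in> A"
      then have "x = h y" using gxy unfolding g_def by simp
      then show "x = y" using hA \<open>x \<notin> A\<close> \<open>y \<in> A\<close> by blast
    next
      assume "x \<notin> A" "y \<notin> A"
      then show "x = y" using gxy unfolding g_def by simp
    qed
  qed
  have surjg: "surj g"
  proof -
    have "y \<in> range g" for y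
    proof (cases "y \<in> A")
      case True
      have "inv_into UNIV h y \<in> A" using ihA True by blast
      then have "g (inv_into UNIV h y) = y" unfolding g_def using hih by simp
      then show ?thesis by (metis UNIV_I image_eqI)
    next
      case False
      then have "g y = y" unfolding g_def by simp
      then show ?thesis by (metis UNIV_I image_eqI)
    qed
    then show ?thesis by blast
  qed
  have Eg: "E x y \<longleftrightarrow> E (g x) (g y)" for x y
  proof (cases "x \<in> A"; cases "y \<in> A")
    assume "x \<in> A" "y \<in> A" then show ?thesis unfolding g_def using Eh by simp
  next
    assume "x \<notin> A" "y \<notin> A" then show ?thesis unfolding g_def by simp
  next
    assume xa: "x \<in> A" "y \<notin> A"
    have "E x y \<longleftrightarrow> E (h x) y"
    proof
      assume "E x y" then show "E (h x) y" using F3 xa hu by auto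
    next
      assume "E (h x) y"
      then have "h x = u" "y = w" using F3 xa hA by auto
      then have "x = u" using hu injh by (metis injD)
      then show "E x y" using \<open>y = w\<close> Euw by simp
    qed
    then show ?thesis unfolding g_def using xa by simp
  next
    assume xa: "x \<notin> A" "y \<in> A"
    have "E y x \<longleftrightarrow> E (h y) x"
    proof
      assume "E y x" then show "E (h y) x" using F3 xa hu by auto
    next
      assume "E (h y) x"
      then have "h y = u" "x = w" using F3 xa hA by auto
      then have "y = u" using hu injh by (metis injD)
      then show "E y x" using \<open>x = w\<close> Euw by simp
    qed
    then show ?thesis unfolding g_def using xa sym by auto
  qed
  have bg: "bij g" using injg surjg by (rule bijI)
  have taut: "tree_aut E g" unfolding tree_aut_def using bg Eg by blast
  have gVX: "g ` VX = VX"
  proof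
    show "g ` VX \<subseteq> VX"
    proof
      fix y assume "y \<in> g ` VX"
      then obtain x where x: "x \<in> VX" "y = g x" by blast
      have "h x \<in> h ` VX" using x(1) by blast
      then have "h x \<in> VX" using hU(2) by simp
      then show "y \<in> VX" using x unfolding g_def by simp
    qed
  next
    show "VX \<subseteq> g ` VX"
    proof
      fix y assume y: "y \<in> VX"
      show "y \<in> g ` VX"
      proof (cases "y \<in> A")
        case True
        have "y \<in> h ` VX" using y hU(2) by simp
        then obtain x where x: "x \<in> VX" "h x = y" by blast
        then have "x \<in> A" using hA' True by simp
        then have "g x = y" unfolding g_def using x by simp
        then show ?thesis using x(1) by blast
      next
        case False then have "g y = y" unfolding g_def by simp
        then show ?thesis using y by (metis image_eqI)
      qed
    qed
  qed
  have laX: "local_action E c g v X \<in> M" if v: "v \<in> VX" for v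
  proof (cases "v \<in> A")
    case True
    have "local_action E c g v X = local_action E c h v X"
      by (rule la_cong[where c=c and v=v and E=E, OF legal(1)[OF v]]) (simp add: g_def True, use True gnb_in in blast)
    then show ?thesis using hU(3) v by simp
  next
    case False
    have "local_action E c g v X = (\<lambda>x\<in>X. x)"
      by (rule la_id[where c=c and v=v and E=E, OF legal(1)[OF v]]) (simp add: g_def False, use False gnb_out in blast)
    then show ?thesis using one by simp
  qed
  have laY: "local_action E c g v Y \<in> N" if v: "v \<notin> VX" for v
  proof (cases "v \<in> A")
    case True
    have "local_action E c g v Y = local_action E c h v Y"
      by (rule la_cong[where c=c and v=v and E=E, OF legal(2)[OF v]]) (simp add: g_def True, use True gnb_in in blast)
    then show ?thesis using hU(4) v by simp
  next
    case False
    have "local_action E c g v Y = (\<lambda>x\<in>Y. x)"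
      by (rule la_id[where c=c and v=v and E=E, OF legal(2)[OF v]]) (simp add: g_def False, use False gnb_out in blast)
    then show ?thesis using one by simp
  qed
  have gU: "g \<in> U_c E VX X Y c M N" unfolding U_c_def using taut gVX laX laY by auto
  have disj: "x \<notin> A" if "x \<in> half_tree E w u" for x
  proof
    assume xA: "x \<in> A"
    have "{w, u} = {u, w}" by auto
    then have "(w, x) \<in> R\<^sup>*" using that unfolding half_tree_def R_def by simp
    moreover have "R\<inverse> = R" unfolding R_def using sym by (auto simp: insert_commute)
    ultimately have "(x, w) \<in> R\<^sup>*" by (metis rtrancl_converseI)
    then have "w \<in> A" using xA unfolding A_def' by (simp add: rtrancl_trans)
    then show False using wA by simp
  qed
  show ?thesis
    using gU disj unfolding u_def[symmetric] w_def[symmetric] A_def[symmetric] g_def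
    by (intro bexI[of _ g]) (auto simp: g_def)
qed

end
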